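(* There is an absolute constant $C$ such that for every finite set $U$ of size $N\ge 4$ and every real $\Delta\ge 0$ there exists a $(\Delta,L)$-UCS over $U$ with $L(P)\le C\,(H(P)+\Delta+\log_2\log_2 N)$ for every $P\in\mathcal P(U)$. That is, there is a deterministic pair $(E,D)$ with $D(Q,E(P,m))=m$ for all $\Delta$-close $P,Q$ and all $m\in U$, whose expected encoding length under $P$ is $O(H(P)+\Delta+\log\log N)$.
   Context: $\mathcal P(U)$ denotes the set of all probability distributions on the finite set $U$; $\{0,1\}^*$ is the set of finite binary strings and $|x|$ the length of $x$. For $P,Q\in\mathcal P(U)$ and $\Delta\ge0$, $P$ and $Q$ are $\Delta$-close if for all $m\in U$, $\log_2(P(m)/Q(m))\le\Delta$ and $\log_2(Q(m)/P(m))\le\Delta$; $\delta(P,Q)$ is the minimum $\Delta$ for which they are $\Delta$-close. $H(P)=\sum_{m}P(m)\log_2(1/P(m))$ is the binary entropy. A $(\Delta,L)$-UCS (uncertain compression scheme) over $U$, where $L:\mathcal P(U)\to\mathbb R^+$, is a pair of maps $E:\mathcal P(U)\times U\to\{0,1\}^*$ and $D:\mathcal P(U)\times\{0,1\}^*\to U$ such that (i) for every pair $P,Q\in\mathcal P(U)$ that are $\Delta$-close and every $m\in U$, $D(Q,E(P,m))=m$, and (ii) for every $P\in\mathcal P(U)$, $\mathbb E_{m\sim P}[|E(P,m)|]\le L(P)$. *)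

theory Defs
  imports Complex_Main
begin

definition distr :: "nat set \<Rightarrow> (nat \<Rightarrow> real) \<Rightarrow> bool" where
  "distr U P \<longleftrightarrow> (\<forall>m\<in>U. 0 \<le> P m) \<and> (\<forall>m. m \<notin> U \<longrightarrow> P m = 0) \<and> sum P U = 1"

text \<open>Delta-closeness: log2(P m / Q m) \<le> Delta and log2(Q m / P m) \<le> Delta for all m,
written multiplicatively (so zero probabilities are handled: P m = 0 iff Q m = 0).\<close>
definition close :: "nat set \<Rightarrow> real \<Rightarrow> (nat \<Rightarrow> real) \<Rightarrow> (nat \<Rightarrow> real) \<Rightarrow> bool" where
  "close U \<Delta> P Q \<longleftrightarrow> (\<forall>m\<in>U. P m \<le> 2 powr \<Delta> * Q m \<and> Q m \<le> 2 powr \<Delta> * P m)"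

definition entropy2 :: "nat set \<Rightarrow> (nat \<Rightarrow> real) \<Rightarrow> real" where
  "entropy2 U P = (\<Sum>m\<in>U. if P m = 0 then 0 else P m * log 2 (1 / P m))"

definition UCS :: "nat set \<Rightarrow> real \<Rightarrow> ((nat \<Rightarrow> real) \<Rightarrow> real)
    \<Rightarrow> ((nat \<Rightarrow> real) \<Rightarrow> nat \<Rightarrow> bool list) \<Rightarrow> ((nat \<Rightarrow> real) \<Rightarrow> bool list \<Rightarrow> nat) \<Rightarrow> bool" where
  "UCS U \<Delta> L E D \<longleftrightarrow>
     (\<forall>Q w. distr U Q \<longrightarrow> D Q w \<in> U) \<and>
     (\<forall>P Q m. distr U P \<longrightarrow> distr U Q \<longrightarrow> close U \<Delta> P Q \<longrightarrow> m \<in> U \<longrightarrow> D Q (E P m) = m) \<and>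
     (\<forall>P. distr U P \<longrightarrow> (\<Sum>m\<in>U. P m * real (length (E P m))) \<le> L P)"

end

theory Submission
  imports Defs
begin


definition fsum :: "nat \<Rightarrow> nat \<Rightarrow> real" where
  "fsum r m = (\<Sum>k\<le>r. (-1)^k * real (r choose k) / real (m+k))"

lemma fsum_step: "m \<ge> 1 \<Longrightarrow> fsum (Suc r) m = fsum r m - fsum r (Suc m)"
proof -
  assume m: "m \<ge> 1"
  have A: "fsum (Suc r) m = 1 / real m + (\<Sum>k\<le>r. (-1)^(Suc k) * real (Suc r choose Suc k) / real (m + Suc k))"
    unfolding fsum_def by (subst sum.atMost_Suc_shift) simp
  have B: "(\<Sum>k\<le>r. (-1)^(Suc k) * real (Suc r choose Suc k) / real (m + Suc k))
     = (\<Sum>k\<le>r. (-1)^(Suc k) * real (r choose Suc k) / real (m + Suc k))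
       + (\<Sum>k\<le>r. (-1)^(Suc k) * real (r choose k) / real (m + Suc k))"
    unfolding sum.distrib[symmetric] by (rule sum.cong) (simp_all add: add_divide_distrib diff_divide_distrib distrib_left)
  have C: "(\<Sum>k\<le>r. (-1)^(Suc k) * real (r choose k) / real (m + Suc k)) = - fsum r (Suc m)"
    unfolding fsum_def by (simp add: sum_negf[symmetric])
  have D: "1 / real m + (\<Sum>k\<le>r. (-1)^(Suc k) * real (r choose Suc k) / real (m + Suc k))
      = (\<Sum>k\<le>Suc r. (-1)^k * real (r choose k) / real (m+k))"
    by (subst sum.atMost_Suc_shift) simp
  have E: "(\<Sum>k\<le>Suc r. (-1)^k * real (r choose k) / real (m+k)) = fsum r m" unfolding fsum_def by simp
  show ?thesis using A B C D E by linarith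
qed

lemma fsum_closed: "m \<ge> 1 \<Longrightarrow> fsum r m = fact r * fact (m - 1) / fact (m + r)"
proof (induction r arbitrary: m)
  case 0
  then show ?case by (simp add: fsum_def fact_reduce[of m])
next
  case (Suc r)
  then obtain m' where m': "m = Suc m'" by (cases m) auto
  have "fsum (Suc r) m = fsum r m - fsum r (Suc m)" using Suc.prems by (rule fsum_step)
  also have "\<dots> = fact r * fact m' / fact (Suc m' + r) - fact r * fact (Suc m') / fact (Suc (Suc m') + r)"
    using Suc.IH[of m] Suc.IH[of "Suc m"] m' by simp
  also have "\<dots> = fact (Suc r) * fact m' / fact (Suc m' + Suc r)"
  proof -
    define F where "F = (fact (m' + r) :: real)"
    have F: "F > 0" unfolding F_def by simp
    have e1: "fact (Suc m' + r) = (real m' + real r + 1) * F" unfolding F_def by (simp add: algebra_simps)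
    have e2: "fact (Suc (Suc m') + r) = (real m' + real r + 2) * ((real m' + real r + 1) * F)" unfolding F_def by (simp add: algebra_simps)
    have e3: "fact (Suc m' + Suc r) = (real m' + real r + 2) * ((real m' + real r + 1) * F)" unfolding F_def by (simp add: algebra_simps)
    have e4: "fact (Suc m') = (real m' + 1) * (fact m' :: real)" by simp
    have e5: "fact (Suc r) = (real r + 1) * (fact r :: real)" by simp
    show ?thesis unfolding e1 e2 e3 e4 e5 using F
      by (simp add: divide_simps) (simp add: algebra_simps)
  qed
  finally show ?case using m' by simp
qed

lemma Lcm_ge_binom:
  assumes m: "m \<ge> 1"
  shows "m * ((m + r) choose m) \<le> Lcm {1..m+r}"
proof -
  define Lc where "Lc = Lcm {1..m+r}"
  have "Lc \<noteq> 0" unfolding Lc_def by (subst Lcm_0_iff) auto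
  hence Lpos: "Lc > 0" by simp
  have dv: "\<And>k. k \<le> r \<Longrightarrow> (m+k) dvd Lc" unfolding Lc_def using m by (intro dvd_Lcm_nat) auto
  define z where "z = (\<Sum>k\<le>r. (-1::int)^k * int (r choose k) * int (Lc div (m+k)))"
  have "real Lc * fsum r m = (\<Sum>k\<le>r. (-1)^k * real (r choose k) * (real Lc / real (m+k)))"
    unfolding fsum_def by (simp add: sum_distrib_left field_simps)
  also have "\<dots> = of_int z" unfolding z_def
    using dv by (auto intro!: sum.cong simp: real_of_nat_div)
  finally have eq1: "real Lc * fsum r m = of_int z" .
  have binom: "real ((m + r) choose m) = fact (m+r) / (fact m * fact r)"
    by (simp add: binomial_fact)
  have "fsum r m = fact r * fact (m - 1) / fact (m + r)" using m by (rule fsum_closed)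
  moreover have "fact m = real m * fact (m - 1)" using m by (cases m) auto
  ultimately have h1: "fsum r m * fact (m + r) = fact r * fact (m - 1)" and
     h2: "fact r * (real m * (fact (m - 1) * real ((m + r) choose m))) = (fact (m + r) :: real)"
    using binom m by (simp_all add: field_simps)
  have "fsum r m * (real m * real ((m + r) choose m)) * fact (m + r) = 
     (fsum r m * fact (m + r)) * (real m * real ((m + r) choose m))" by (simp add: algebra_simps)
  also have "\<dots> = fact (m + r)" unfolding h1 using h2 by (simp add: algebra_simps)
  finally have "fsum r m * (real m * real ((m + r) choose m)) = 1" by simp
  hence "real Lc = of_int z * (real m * real ((m + r) choose m))" using eq1
    by (metis mult.assoc mult.right_neutral)
  moreover have "real m * real ((m + r) choose m) > 0" using m by simp
  ultimately have "z > 0" using Lpos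
    by (metis of_int_0_less_iff of_nat_0_less_iff zero_less_mult_pos2)
  hence "real Lc \<ge> 1 * (real m * real ((m + r) choose m))"
    using \<open>real Lc = _\<close> \<open>real m * real _ > 0\<close>
    by (metis mult_right_mono of_int_1_le_iff order_less_imp_le zero_less_imp_eq_int int_one_le_iff_zero_less)
  then show ?thesis unfolding Lc_def by (simp del: of_nat_mult add: of_nat_mult[symmetric])
qed

lemma Lcm_ge_pow2:
  assumes "n \<ge> 1" shows "2^n \<le> Lcm {1..2*n}"
proof -
  have "n * ((n + n) choose n) \<le> Lcm {1..n+n}" using assms by (rule Lcm_ge_binom)
  hence a: "real (n * ((2*n) choose n)) \<le> real (Lcm {1..2*n})" by (metis of_nat_le_iff mult_2)
  have "4^n / (2*real n) \<le> real ((2*n) choose n)" using assms by (intro central_binomial_lower_bound) auto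
  hence "4^n / 2 \<le> real n * real ((2*n) choose n)" using assms by (simp add: field_simps)
  moreover have "(2::real)^n \<le> 4^n/2"
  proof -
    have "(4::real)^n = 2^n * 2^n" by (simp add: power_mult_distrib[symmetric])
    moreover have "(2::real)^n \<ge> 2" using assms by (metis power_one_right power_increasing one_le_numeral)
    ultimately show ?thesis by simp
  qed
  ultimately have "(2::real)^n \<le> real (Lcm {1..2*n})" using a by (simp only: of_nat_mult)
  then show ?thesis by (metis of_nat_le_iff of_nat_numeral of_nat_power)
qed



lemma sep_exists:
  fixes A :: "nat set"
  assumes fin: "finite A" and ne: "A \<noteq> {}" and bnd: "\<And>d. d \<in> A \<Longrightarrow> 0 < d \<and> d < 2^l"
  shows "\<exists>q. 1 \<le> q \<and> q \<le> 2 * (card A * l) \<and> (\<forall>d\<in>A. \<not> q dvd d)"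
proof (rule ccontr)
  assume H: "\<not> ?thesis"
  obtain d0 where d0: "d0 \<in> A" using ne by auto
  have "l \<ge> 1" using bnd[OF d0] by (cases l) auto
  moreover have "card A \<ge> 1" using fin ne by (simp add: Suc_le_eq card_gt_0_iff)
  ultimately have n1: "card A * l \<ge> 1" by simp
  define n where "n = card A * l"
  have all: "\<forall>q\<in>{1..2*n}. q dvd \<Prod>A"
  proof
    fix q assume q: "q \<in> {1..2*n}"
    then obtain d where "d \<in> A" "q dvd d" using H unfolding n_def by auto
    then show "q dvd \<Prod>A" using fin by (meson dvd_prodI dvd_trans)
  qed
  have "Lcm {1..2*n} dvd \<Prod>A" using all by (intro Lcm_least) auto
  moreover have "\<Prod>A > 0" using fin bnd by (simp add: prod_pos)
  ultimately have "Lcm {1..2*n} \<le> \<Prod>A" by (simp add: dvd_imp_le)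
  moreover have "2^n \<le> Lcm {1..2*n}" using n1 unfolding n_def by (intro Lcm_ge_pow2) simp
  moreover have "\<Prod>A < 2^n"
  proof -
    have "\<Prod>A \<le> (\<Prod>d\<in>A. 2^l - 1)"
    proof (intro prod_mono)
      fix i assume "i \<in> A"
      then have "i < 2^l" using bnd by auto
      then show "0 \<le> i \<and> i \<le> 2^l - 1" by arith
    qed
    also have "\<dots> = (2^l - 1)^card A" by simp
    also have "\<dots> < (2^l)^card A" using n1 by (intro power_strict_mono) (auto simp: n_def)
    also have "\<dots> = 2^n" by (simp add: n_def power_mult mult.commute)
    finally show ?thesis .
  qed
  ultimately show False by linarith
qed

definition idx :: "nat set \<Rightarrow> nat \<Rightarrow> nat" where
  "idx U x = card {y\<in>U. y < x}"

lemma idx_less: "finite U \<Longrightarrow> x \<in> U \<Longrightarrow> idx U x < card U"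
  unfolding idx_def by (rule psubset_card_mono) auto

lemma idx_mono: "finite U \<Longrightarrow> x \<in> U \<Longrightarrow> x < y \<Longrightarrow> idx U x < idx U y"
  unfolding idx_def
proof (rule psubset_card_mono)
  assume "finite U" "x \<in> U" "x < y"
  then show "finite {z \<in> U. z < y}" by simp
  have "{z \<in> U. z < x} \<subseteq> {z \<in> U. z < y}" using \<open>x < y\<close> by auto
  moreover have "x \<in> {z \<in> U. z < y}" "x \<notin> {z \<in> U. z < x}" using \<open>x \<in> U\<close> \<open>x < y\<close> by auto
  ultimately show "{z \<in> U. z < x} \<subset> {z \<in> U. z < y}" by blast
qed

lemma idx_inj: "finite U \<Longrightarrow> x \<in> U \<Longrightarrow> y \<in> U \<Longrightarrow> x \<noteq> y \<Longrightarrow> idx U x \<noteq> idx U y"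
  by (metis idx_mono nat_neq_iff)

fun bits :: "nat \<Rightarrow> nat \<Rightarrow> bool list" where
  "bits 0 n = []"
| "bits (Suc a) n = odd n # bits a (n div 2)"

fun unbits :: "bool list \<Rightarrow> nat" where
  "unbits [] = 0"
| "unbits (b # bs) = (if b then 1 else 0) + 2 * unbits bs"

lemma length_bits [simp]: "length (bits a n) = a"
  by (induction a arbitrary: n) auto

lemma unbits_bits: "unbits (bits a n) = n mod 2^a"
proof (induction a arbitrary: n)
  case 0 then show ?case by simp
next
  case (Suc a)
  have "n mod 2^Suc a = 2 * (n div 2 mod 2^a) + n mod 2"
    by (metis mod_mult2_eq power_Suc)
  moreover have "unbits (bits (Suc a) n) = n mod 2 + 2 * (n div 2 mod 2^a)"
  proof -
    have "unbits (bits (Suc a) n) = (if odd n then 1 else 0) + 2 * unbits (bits a (n div 2))" by simp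
    also have "\<dots> = (if odd n then 1 else 0) + 2 * (n div 2 mod 2^a)" using Suc.IH by simp
    also have "(if odd n then 1 else (0::nat)) = n mod 2" by (simp add: mod_2_eq_odd)
    finally show ?thesis .
  qed
  ultimately show ?case by simp
qed

definition enc :: "nat \<Rightarrow> nat \<Rightarrow> nat \<Rightarrow> nat \<Rightarrow> bool list" where
  "enc k a q r = replicate k True @ False # replicate a True @ False # bits a q @ bits a r"

definition dec :: "bool list \<Rightarrow> nat \<times> nat \<times> nat \<times> nat" where
  "dec w = (let k = length (takeWhile id w); w1 = drop (Suc k) w;
               a = length (takeWhile id w1); w2 = drop (Suc a) w1
            in (k, a, unbits (take a w2), unbits (take a (drop a w2))))"

lemma takeWhile_rep: "takeWhile id (replicate k True @ False # w) = replicate k True"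
  by (induction k) auto
lemma drop_rep: "drop (Suc k) (replicate k True @ False # w) = w"
  by (induction k) auto

lemma dec_enc: "dec (enc k a q r) = (k, a, q mod 2^a, r mod 2^a)"
proof -
  have t1: "take a (bits a q @ bits a r) = bits a q" by simp
  have t2: "drop a (bits a q @ bits a r) = bits a r" by simp
  show ?thesis unfolding dec_def enc_def Let_def takeWhile_rep drop_rep length_replicate t1 t2
    by (simp add: unbits_bits del: bits.simps)
qed

lemma length_enc: "length (enc k a q r) = k + 3 * a + 2"
  unfolding enc_def by simp



definition lev :: "real \<Rightarrow> nat" where "lev p = nat \<lceil>log 2 (1 / p)\<rceil>"

definition Tset :: "nat set \<Rightarrow> real \<Rightarrow> (nat \<Rightarrow> real) \<Rightarrow> nat \<Rightarrow> nat set" where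
  "Tset U \<Delta> P m = (if P m = 0 then U else {x\<in>U. 2 powr (-(real (lev (P m))) - 2*\<Delta>) \<le> P x})"

definition sepq :: "nat set \<Rightarrow> nat set \<Rightarrow> nat \<Rightarrow> nat \<Rightarrow> bool" where
  "sepq U T m q \<longleftrightarrow> 0 < q \<and> (\<forall>x\<in>T. x \<noteq> m \<longrightarrow> idx U x mod q \<noteq> idx U m mod q)"

definition qsel :: "nat set \<Rightarrow> nat set \<Rightarrow> nat \<Rightarrow> nat" where
  "qsel U T m = (LEAST q. sepq U T m q)"

definition asel :: "nat \<Rightarrow> nat" where "asel q = (LEAST a. q < 2^a)"

definition Enc :: "nat set \<Rightarrow> real \<Rightarrow> (nat \<Rightarrow> real) \<Rightarrow> nat \<Rightarrow> bool list" where
  "Enc U \<Delta> P m = (let q = qsel U (Tset U \<Delta> P m) m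
     in enc (if P m = 0 then 0 else Suc (lev (P m))) (asel q) q (idx U m mod q))"

definition Sset :: "nat set \<Rightarrow> real \<Rightarrow> (nat \<Rightarrow> real) \<Rightarrow> nat \<Rightarrow> nat set" where
  "Sset U \<Delta> Q k = (if k = 0 then U else {x\<in>U. 2 powr (-(real (k - 1)) - \<Delta>) \<le> Q x})"

definition pick :: "nat set \<Rightarrow> nat set \<Rightarrow> nat" where
  "pick U A = (if A \<noteq> {} then (SOME x. x \<in> A) else (SOME x. x \<in> U))"

definition Dec :: "nat set \<Rightarrow> real \<Rightarrow> (nat \<Rightarrow> real) \<Rightarrow> bool list \<Rightarrow> nat" where
  "Dec U \<Delta> Q w = (case dec w of (k, a, q, r) \<Rightarrow> pick U {x \<in> Sset U \<Delta> Q k. idx U x mod q = r})"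

lemma pick_in: "U \<noteq> {} \<Longrightarrow> A \<subseteq> U \<Longrightarrow> pick U A \<in> U"
proof -
  assume "U \<noteq> {}" "A \<subseteq> U"
  then show ?thesis unfolding pick_def
    by (cases "A = {}") (simp_all add: some_in_eq subset_iff)
qed

lemma pick_single: "pick U {m} = m" unfolding pick_def by simp

lemma Sset_sub: "Sset U \<Delta> Q k \<subseteq> U" unfolding Sset_def by auto

lemma sepq_ex: "finite U \<Longrightarrow> m \<in> U \<Longrightarrow> T \<subseteq> U \<Longrightarrow> sepq U T m (card U)"
proof -
  assume U: "finite U" "m \<in> U" "T \<subseteq> U"
  have "0 < card U" using U card_gt_0_iff by blast
  moreover have "idx U x mod card U \<noteq> idx U m mod card U" if "x \<in> T" "x \<noteq> m" for x
  proof -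
    have x: "x \<in> U" using that U by blast
    have "idx U x mod card U = idx U x" using idx_less[OF U(1) x] by simp
    moreover have "idx U m mod card U = idx U m" using idx_less[OF U(1) U(2)] by simp
    ultimately show ?thesis using idx_inj[OF U(1) x U(2) that(2)] by simp
  qed
  ultimately show ?thesis unfolding sepq_def by blast
qed

lemma qsel_sep: "finite U \<Longrightarrow> m \<in> U \<Longrightarrow> T \<subseteq> U \<Longrightarrow> sepq U T m (qsel U T m)"
  unfolding qsel_def by (rule LeastI[of _ "card U"], rule sepq_ex)

lemma asel: "q < 2 ^ asel q" unfolding asel_def by (rule LeastI_ex) (metis less_exp)

lemma distr_le1: "distr U P \<Longrightarrow> finite U \<Longrightarrow> m \<in> U \<Longrightarrow> P m \<le> 1"
proof -
  assume d: "distr U P" and U: "finite U" "m \<in> U"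
  have "P m \<le> sum P U" using d U unfolding distr_def by (intro member_le_sum) auto
  then show ?thesis using d unfolding distr_def by simp
qed

lemma lev_le: "0 < p \<Longrightarrow> p \<le> 1 \<Longrightarrow> 2 powr (-(real (lev p))) \<le> p"
proof -
  assume p: "0 < p" "p \<le> 1"
  have "log 2 (1/p) \<le> real (lev p)" unfolding lev_def by linarith
  hence "1/p \<le> 2 powr real (lev p)" using p by (simp add: log_le_iff le_log_iff)
  thus ?thesis using p by (simp add: powr_minus field_simps)
qed

lemma lev_less: "0 < p \<Longrightarrow> p \<le> 1 \<Longrightarrow> real (lev p) < log 2 (1 / p) + 1"
proof -
  assume p: "0 < p" "p \<le> 1"
  have "log 2 (1/p) \<ge> 0" using p by simp
  thus ?thesis unfolding lev_def by linarith
qed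


lemma distr_nonneg: "distr U P \<Longrightarrow> m \<in> U \<Longrightarrow> 0 \<le> P m" unfolding distr_def by auto

lemma pow_split: "(2::real) powr (a - b) = 2 powr a / 2 powr b"
  by (simp add: powr_diff)

lemma correct:
  assumes U: "finite U" "U \<noteq> {}" and P: "distr U P" and Q: "distr U Q"
    and cl: "close U \<Delta> P Q" and m: "m \<in> U"
  shows "Dec U \<Delta> Q (Enc U \<Delta> P m) = m"
proof -
  define T where "T = Tset U \<Delta> P m"
  define q where "q = qsel U T m"
  define k where "k = (if P m = 0 then 0 else Suc (lev (P m)))"
  have TU: "T \<subseteq> U" unfolding T_def Tset_def by auto
  have sq: "sepq U T m q" unfolding q_def using U(1) m TU by (rule qsel_sep)
  hence q0: "0 < q" unfolding sepq_def by simp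
  have qa: "q < 2 ^ asel q" by (rule asel)
  have ra: "idx U m mod q < 2 ^ asel q" using q0 qa by (meson mod_less_divisor order.strict_trans)
  have E: "Enc U \<Delta> P m = enc k (asel q) q (idx U m mod q)"
    unfolding Enc_def k_def q_def T_def Let_def by simp
  define S where "S = Sset U \<Delta> Q k"
  have mS: "m \<in> S"
  proof (cases "P m = 0")
    case True then show ?thesis unfolding S_def Sset_def k_def using m by simp
  next
    case False
    have p: "0 < P m" "P m \<le> 1" using False distr_nonneg[OF P m] distr_le1[OF P U(1) m] by auto
    have "2 powr (-(real (lev (P m)))) \<le> P m" using p by (rule lev_le)
    also have "P m \<le> 2 powr \<Delta> * Q m" using cl m unfolding close_def by auto
    finally have "2 powr (-(real (lev (P m)))) / 2 powr \<Delta> \<le> Q m" by (simp add: field_simps)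
    hence "2 powr (-(real (lev (P m))) - \<Delta>) \<le> Q m" by (simp add: pow_split)
    then show ?thesis unfolding S_def Sset_def k_def using m False by simp
  qed
  have ST: "S \<subseteq> T"
  proof (cases "P m = 0")
    case True then show ?thesis unfolding S_def Sset_def k_def T_def Tset_def by simp
  next
    case False
    show ?thesis
    proof
      fix x assume x: "x \<in> S"
      hence xU: "x \<in> U" and h: "2 powr (-(real (lev (P m))) - \<Delta>) \<le> Q x"
        unfolding S_def Sset_def k_def using False by auto
      note h
      also have "Q x \<le> 2 powr \<Delta> * P x" using cl xU unfolding close_def by auto
      finally have "2 powr (-(real (lev (P m))) - \<Delta>) / 2 powr \<Delta> \<le> P x" by (simp add: field_simps)
      moreover have "(2::real) powr (2 * \<Delta>) = 2 powr \<Delta> * 2 powr \<Delta>" by (simp add: powr_add[symmetric])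
      ultimately have "2 powr (-(real (lev (P m))) - 2 * \<Delta>) \<le> P x" by (simp add: pow_split)
      then show "x \<in> T" unfolding T_def Tset_def using False xU by simp
    qed
  qed
  have set1: "{x \<in> S. idx U x mod q = idx U m mod q} = {m}"
    using mS ST sq unfolding sepq_def by auto
  show ?thesis unfolding E Dec_def dec_enc using qa ra
    by (simp add: S_def[symmetric] set1 pick_single)
qed

lemma card_T_bound:
  assumes U: "finite U" and P: "distr U P" and c: "0 < c"
  shows "real (card {x\<in>U. c \<le> P x}) \<le> 1 / c"
proof -
  let ?T = "{x\<in>U. c \<le> P x}"
  have "real (card ?T) * c = (\<Sum>x\<in>?T. c)" by simp
  also have "\<dots> \<le> (\<Sum>x\<in>?T. P x)" by (rule sum_mono) auto
  also have "\<dots> \<le> (\<Sum>x\<in>U. P x)" using U P unfolding distr_def by (intro sum_mono2) auto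
  also have "\<dots> = 1" using P unfolding distr_def by simp
  finally show ?thesis using c by (simp add: field_simps)
qed

lemma dvd_diff_nat_abs:
  fixes a b q :: nat
  assumes "a mod q = b mod q"
  shows "q dvd nat \<bar>int a - int b\<bar>"
proof -
  have "int a mod int q = int b mod int q" using assms by (metis of_nat_mod)
  hence "int q dvd int a - int b" by (simp add: mod_eq_dvd_iff)
  hence "int q dvd \<bar>int a - int b\<bar>" by simp
  thus ?thesis by (metis int_dvd_int_iff abs_ge_zero int_nat_eq)
qed

lemma qsel_bound:
  assumes U: "finite U" and m: "m \<in> U" and TU: "T \<subseteq> U" and mT: "m \<in> T"
    and l: "card U \<le> 2 ^ l" "1 \<le> l"
  shows "qsel U T m \<le> 2 * card T * l"
proof (cases "T - {m} = {}")
  case True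
  have "sepq U T m 1" unfolding sepq_def using True by auto
  hence "qsel U T m \<le> 1" unfolding qsel_def by (rule Least_le)
  moreover have c1: "card T \<ge> 1" using mT U TU by (metis One_nat_def Suc_leI card_gt_0_iff empty_iff finite_subset)
  have h: "1 * 1 \<le> card T * l" by (rule mult_le_mono) (use c1 l(2) in auto)
  ultimately have "qsel U T m \<le> 2 * (card T * l)" by linarith
  then show ?thesis by (simp add: mult.assoc)
next
  case False
  have fT: "finite T" using U TU finite_subset by blast
  define A where "A = (\<lambda>x. nat \<bar>int (idx U x) - int (idx U m)\<bar>) ` (T - {m})"
  have fA: "finite A" unfolding A_def using fT by simp
  have nA: "A \<noteq> {}" unfolding A_def using False by simp
  have bA: "0 < d \<and> d < 2^l" if dA: "d \<in> A" for d
  proof -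
    obtain x where x: "x \<in> T" "x \<noteq> m" and d: "d = nat \<bar>int (idx U x) - int (idx U m)\<bar>"
      using dA unfolding A_def by auto
    have xU: "x \<in> U" using x TU by auto
    have "idx U x \<noteq> idx U m" using idx_inj[OF U xU m x(2)] .
    moreover have "idx U x < card U" "idx U m < card U" using idx_less U xU m by auto
    moreover have ci: "int (card U) \<le> 2^l" using l(1) by (metis of_nat_le_iff of_nat_numeral of_nat_power)
    ultimately have z: "\<bar>int (idx U x) - int (idx U m)\<bar> < 2^l" "int (idx U x) - int (idx U m) \<noteq> 0" by arith+
    have "nat \<bar>int (idx U x) - int (idx U m)\<bar> < nat (2^l)" using z(1) by (simp only: nat_less_eq_zless abs_ge_zero)
    moreover have "nat ((2::int)^l) = 2^l" by (simp add: nat_power_eq)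
    ultimately show ?thesis unfolding d using z(2) by simp
  qed
  obtain q' where q': "1 \<le> q'" "q' \<le> 2 * (card A * l)" "\<forall>d\<in>A. \<not> q' dvd d"
    using sep_exists[OF fA nA bA] by blast
  have "sepq U T m q'"
    unfolding sepq_def
  proof (intro conjI ballI impI)
    show "0 < q'" using q' by simp
    fix x assume x: "x \<in> T" "x \<noteq> m"
    show "idx U x mod q' \<noteq> idx U m mod q'"
    proof
      assume "idx U x mod q' = idx U m mod q'"
      hence "q' dvd nat \<bar>int (idx U x) - int (idx U m)\<bar>" by (rule dvd_diff_nat_abs)
      moreover have "nat \<bar>int (idx U x) - int (idx U m)\<bar> \<in> A" unfolding A_def using x by auto
      ultimately show False using q'(3) by blast
    qed
  qed
  hence "qsel U T m \<le> q'" unfolding qsel_def by (rule Least_le)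
  moreover have cAT: "card A \<le> card T"
  proof -
    have "card A \<le> card (T - {m})" unfolding A_def by (rule card_image_le) (simp add: fT)
    also have "\<dots> \<le> card T" using fT by (simp add: card_Diff1_le)
    finally show ?thesis .
  qed
  moreover have "card A * l \<le> card T * l" using cAT by (rule mult_le_mono1)
  ultimately have "qsel U T m \<le> 2 * (card T * l)" using q'(2) by linarith
  then show ?thesis by (simp add: mult.assoc)
qed

lemma asel_bound: assumes q: "1 \<le> q" shows "real (asel q) \<le> log 2 (real q) + 1"
proof (cases "asel q")
  case 0
  have "0 \<le> log 2 (real q)" using q by simp
  then show ?thesis using 0 by simp
next
  case (Suc b)
  have "\<not> q < 2 ^ b" using Suc unfolding asel_def by (metis lessI not_less_Least)
  hence "2 ^ b \<le> q" by simp
  hence "(2::real) ^ b \<le> real q" by (metis of_nat_le_iff of_nat_numeral of_nat_power)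
  hence "real b \<le> log 2 (real q)" using q by (simp add: le_log_iff powr_realpow)
  then show ?thesis using Suc by simp
qed

lemma len_bound:
  assumes U: "finite U" and N4: "card U \<ge> 4" and D: "\<Delta> \<ge> 0" and P: "distr U P"
    and m: "m \<in> U" and pm: "P m \<noteq> 0"
  shows "real (length (Enc U \<Delta> P m)) \<le> 4 * log 2 (1 / P m) + 6 * \<Delta> + 3 * log 2 (log 2 (real (card U))) + 16"
proof -
  define p where "p = P m"
  have p: "0 < p" "p \<le> 1" using pm distr_nonneg[OF P m] distr_le1[OF P U m] unfolding p_def by auto
  define j where "j = lev p"
  define c where "c = (2::real) powr (-(real j) - 2*\<Delta>)"
  have c0: "0 < c" unfolding c_def by simp
  define T where "T = Tset U \<Delta> P m"
  have Tdef: "T = {x\<in>U. c \<le> P x}" unfolding T_def Tset_def c_def j_def p_def using pm by simp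
  have TU: "T \<subseteq> U" unfolding Tdef by auto
  have "c \<le> 2 powr (-(real j))" unfolding c_def using D by simp
  also have "\<dots> \<le> p" unfolding j_def using p by (rule lev_le)
  finally have mT: "m \<in> T" unfolding Tdef p_def using m by simp
  have cT: "real (card T) \<le> 1 / c" unfolding Tdef using U P c0 by (rule card_T_bound)
  have cT': "1 / c = 2 powr (real j + 2 * \<Delta>)"
  proof -
    have e: "-(real j) - 2*\<Delta> = -(real j + 2*\<Delta>)" by simp
    show ?thesis unfolding c_def e powr_minus by (simp add: divide_inverse)
  qed
  define N where "N = real (card U)"
  have N4': "N \<ge> 4" unfolding N_def using N4 by simp
  have lgN: "log 2 N \<ge> 2"
  proof -
    have "log 2 4 \<le> log 2 N" using N4' by simp
    moreover have "log 2 (4::real) = 2"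
      using log_powr_cancel[of "2::real" 2] by simp
    ultimately show ?thesis by simp
  qed
  define l where "l = nat \<lceil>log 2 N\<rceil>"
  have l1: "1 \<le> l" unfolding l_def using lgN by linarith
  have lr: "real l \<le> log 2 N + 1" unfolding l_def using lgN by linarith
  have Nl: "card U \<le> 2 ^ l"
  proof -
    have "log 2 N \<le> real l" unfolding l_def by linarith
    hence "N \<le> 2 powr real l" using N4' by (simp add: log_le_iff)
    hence "N \<le> 2 ^ l" by (simp add: powr_realpow)
    thus ?thesis unfolding N_def by (metis of_nat_le_iff of_nat_numeral of_nat_power)
  qed
  define q where "q = qsel U T m"
  have q1: "1 \<le> q" using qsel_sep[OF U m TU] unfolding q_def sepq_def by simp
  have qb: "q \<le> 2 * card T * l" unfolding q_def using U m TU mT Nl l1 by (rule qsel_bound)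
  have qr: "real q \<le> 2 * 2 powr (real j + 2 * \<Delta>) * real l"
  proof -
    have "real q \<le> 2 * real (card T) * real l" using qb by (metis of_nat_le_iff of_nat_mult of_nat_numeral)
    also have "\<dots> \<le> 2 * 2 powr (real j + 2 * \<Delta>) * real l" using cT cT' by (intro mult_right_mono) auto
    finally show ?thesis .
  qed
  have lq: "log 2 (real q) \<le> 1 + (real j + 2 * \<Delta>) + log 2 (real l)"
  proof -
    have "log 2 (real q) \<le> log 2 (2 * 2 powr (real j + 2 * \<Delta>) * real l)"
      using qr q1 l1 by (subst log_le_cancel_iff) auto
    also have "\<dots> = 1 + (real j + 2 * \<Delta>) + log 2 (real l)"
      using l1 by (simp add: log_mult)
    finally show ?thesis .
  qed
  have ll: "log 2 (real l) \<le> 1 + log 2 (log 2 N)"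
  proof -
    have "real l \<le> 2 * log 2 N" using lr lgN by linarith
    hence "log 2 (real l) \<le> log 2 (2 * log 2 N)" using l1 by (subst log_le_cancel_iff) auto
    also have "\<dots> = 1 + log 2 (log 2 N)" using lgN by (simp add: log_mult)
    finally show ?thesis .
  qed
  have a: "real (asel q) \<le> log 2 (real q) + 1" using q1 by (rule asel_bound)
  have len: "length (Enc U \<Delta> P m) = Suc j + 3 * asel q + 2"
    unfolding Enc_def Let_def length_enc q_def T_def j_def p_def using pm by simp
  have jl: "real j < log 2 (1 / p) + 1" unfolding j_def using p by (rule lev_less)
  show ?thesis unfolding len using a lq ll jl D unfolding N_def p_def by simp
qed

lemma LL_ge1: "card U \<ge> 4 \<Longrightarrow> 1 \<le> log 2 (log 2 (real (card U)))"
proof -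
  assume N4: "card U \<ge> 4"
  have "log 2 4 \<le> log 2 (real (card U))" using N4 by simp
  moreover have "log 2 (4::real) = 2" using log_powr_cancel[of "2::real" 2] by simp
  ultimately have "2 \<le> log 2 (real (card U))" by simp
  hence "log 2 2 \<le> log 2 (log 2 (real (card U)))" by simp
  thus ?thesis by simp
qed

lemma entropy_nonneg: "finite U \<Longrightarrow> distr U P \<Longrightarrow> 0 \<le> entropy2 U P"
  unfolding entropy2_def
proof (rule sum_nonneg)
  fix m assume U: "finite U" and P: "distr U P" and m: "m \<in> U"
  have p: "0 \<le> P m" "P m \<le> 1" using distr_nonneg[OF P m] distr_le1[OF P U m] by auto
  show "0 \<le> (if P m = 0 then 0 else P m * log 2 (1 / P m))"
  proof (cases "P m = 0")
    case False
    hence "0 \<le> log 2 (1 / P m)" using p by simp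
    then show ?thesis using p by simp
  qed simp
qed

lemma expected:
  assumes U: "finite U" and N4: "card U \<ge> 4" and D: "\<Delta> \<ge> 0" and P: "distr U P"
  shows "(\<Sum>m\<in>U. P m * real (length (Enc U \<Delta> P m)))
     \<le> 4 * entropy2 U P + 6 * \<Delta> + 19 * log 2 (log 2 (real (card U)))"
proof -
  define LL where "LL = log 2 (log 2 (real (card U)))"
  define K where "K = 6 * \<Delta> + 3 * LL + 16"
  have "(\<Sum>m\<in>U. P m * real (length (Enc U \<Delta> P m)))
     \<le> (\<Sum>m\<in>U. 4 * (if P m = 0 then 0 else P m * log 2 (1 / P m)) + K * P m)"
  proof (rule sum_mono)
    fix m assume m: "m \<in> U"
    show "P m * real (length (Enc U \<Delta> P m)) \<le> 4 * (if P m = 0 then 0 else P m * log 2 (1 / P m)) + K * P m"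
    proof (cases "P m = 0")
      case False
      have "P m * real (length (Enc U \<Delta> P m)) \<le> P m * (4 * log 2 (1 / P m) + K)"
        using len_bound[OF U N4 D P m False] distr_nonneg[OF P m] unfolding K_def LL_def
        by (intro mult_left_mono) auto
      then show ?thesis using False by (simp add: algebra_simps)
    qed simp
  qed
  also have "\<dots> = 4 * entropy2 U P + K * (\<Sum>m\<in>U. P m)"
    unfolding entropy2_def by (simp add: sum.distrib sum_distrib_left)
  also have "\<dots> = 4 * entropy2 U P + K" using P unfolding distr_def by simp
  also have "\<dots> \<le> 4 * entropy2 U P + 6 * \<Delta> + 19 * LL"
    using LL_ge1[OF N4] unfolding K_def LL_def by simp
  finally show ?thesis unfolding LL_def .
qed

theorem theorem1:
  shows "\<exists>C::real. \<forall>(U::nat set) \<Delta>::real. finite U \<longrightarrow> card U \<ge> 4 \<longrightarrow> \<Delta> \<ge> 0 \<longrightarrow>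
     (\<exists>L E D. UCS U \<Delta> L E D \<and> (\<forall>P. distr U P \<longrightarrow> 0 < L P) \<and>
        (\<forall>P. distr U P \<longrightarrow>
           L P \<le> C * (entropy2 U P + \<Delta> + log 2 (log 2 (real (card U))))))"
proof (rule exI[of _ 19], intro allI impI)
  fix U :: "nat set" and \<Delta> :: real
  assume U: "finite U" and N4: "card U \<ge> 4" and D: "\<Delta> \<ge> 0"
  have Une: "U \<noteq> {}" using N4 by auto
  define LL where "LL = log 2 (log 2 (real (card U)))"
  have LL1: "1 \<le> LL" unfolding LL_def using N4 by (rule LL_ge1)
  let ?L = "\<lambda>P. 4 * entropy2 U P + 6 * \<Delta> + 19 * LL"
  show "\<exists>L E D. UCS U \<Delta> L E D \<and> (\<forall>P. distr U P \<longrightarrow> 0 < L P) \<and>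
        (\<forall>P. distr U P \<longrightarrow>
           L P \<le> 19 * (entropy2 U P + \<Delta> + log 2 (log 2 (real (card U)))))"
  proof (rule exI[of _ ?L], rule exI[of _ "Enc U \<Delta>"], rule exI[of _ "Dec U \<Delta>"], intro conjI allI impI)
    show "UCS U \<Delta> ?L (Enc U \<Delta>) (Dec U \<Delta>)"
      unfolding UCS_def
    proof (intro conjI allI impI)
      fix Q w
      show "Dec U \<Delta> Q w \<in> U" unfolding Dec_def
        by (cases "dec w") (auto intro!: pick_in Une dest: subsetD[OF Sset_sub])
    next
      fix P Q m assume "distr U P" "distr U Q" "close U \<Delta> P Q" "m \<in> U"
      then show "Dec U \<Delta> Q (Enc U \<Delta> P m) = m" using correct U Une by blast
    next
      fix P assume "distr U P"
      then show "(\<Sum>m\<in>U. P m * real (length (Enc U \<Delta> P m))) \<le> ?L P"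
        using expected[OF U N4 D] unfolding LL_def by blast
    qed
  next
    fix P assume P: "distr U P"
    have "0 \<le> entropy2 U P" using U P by (rule entropy_nonneg)
    then show "0 < ?L P" using LL1 D by simp
  next
    fix P assume P: "distr U P"
    have "0 \<le> entropy2 U P" using U P by (rule entropy_nonneg)
    then show "?L P \<le> 19 * (entropy2 U P + \<Delta> + log 2 (log 2 (real (card U))))"
      using LL1 D unfolding LL_def by simp
  qed
qed

end
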